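(* Let $f$, $c$, $h$, $\tilde h$ be as in the context, let $F_0$ be a probability distribution on $[\mu_{\min},\mu_{\max}]$ and let $L_{F_0}$ be the unique solution of $\int_{\mu_{\min}}^{\mu_{\max}}\mu\frac{1+\beta}{\bar\mu_{F_0}(1+L_{F_0}\tilde h(\mu))}dF_0(\mu)=\beta$. Then for any $a>0$ the function \[ U(\mu)=f\Big(\big(1+L_{F_0}\tilde h(\mu)\big)^{-1}\Big)-a\,c(\mu) \] is concave on $[\mu_{\min},\mu_{\max}]$.
   Context: $0<\mu_{\min}\le\mu_{\max}<\infty$, $\beta>0$; $\bar\mu_{F_0}$ is the mean of $F_0$. The utility-of-idleness function $f$ is concave, increasing and twice continuously differentiable; the effort cost function $c$ is convex, increasing and twice continuously differentiable. $h:[\mu_{\min},\mu_{\max}]\to\mathbb R$ satisfies $h(\mu)>0$, and $\tilde h(\mu)=h(\mu)/\mu$ is convex, strictly decreasing, twice differentiable, and satisfies $2\tilde h'(\mu)^2\le\tilde h(\mu)\tilde h''(\mu)$ for all $\mu\in[\mu_{\min},\mu_{\max}]$. *)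

theory Defs
  imports "HOL-Probability.Probability"
begin

text \<open>Twice continuously differentiable on a set S (derivatives taken within S,
  so that closed intervals are handled via one-sided derivatives at the endpoints).\<close>
definition C2_on :: "real set \<Rightarrow> (real \<Rightarrow> real) \<Rightarrow> bool" where
  "C2_on S g \<longleftrightarrow> (\<exists>g' g''. (\<forall>x\<in>S. (g has_real_derivative g' x) (at x within S)
       \<and> (g' has_real_derivative g'' x) (at x within S)) \<and> continuous_on S g'')"

end

theory Submission
  imports Defs
begin


lemma mvt_within:
  fixes F F' :: "real \<Rightarrow> real"
  assumes d: "\<forall>x\<in>{a..b}. (F has_real_derivative F' x) (at x within {a..b})"
    and xy: "a \<le> x" "x < y" "y \<le> b"
  shows "\<exists>z. x < z \<and> z < y \<and> F y - F x = (y - x) * F' z"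
proof -
  have c: "continuous_on {a..b} F" by (rule DERIV_continuous_on) (use d in auto)
  have dz: "DERIV F z :> F' z" if "x < z" "z < y" for z
    using d that xy at_within_Icc_at[of a z b] by (metis atLeastAtMost_iff dual_order.strict_trans1 less_eq_real_def order.strict_trans2)
  have "\<exists>l z. x < z \<and> z < y \<and> DERIV F z :> l \<and> F y - F x = (y - x) * l"
    by (rule MVT) (use xy c dz in \<open>auto intro: continuous_on_subset simp: real_differentiable_def\<close>)
  then show ?thesis using dz DERIV_unique by metis
qed

lemma convex_second:
  fixes F F' F'' :: "real \<Rightarrow> real"
  assumes d1: "\<forall>x\<in>{a..b}. (F has_real_derivative F' x) (at x within {a..b})"
    and d2: "\<forall>x\<in>{a..b}. (F' has_real_derivative F'' x) (at x within {a..b})"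
    and nn: "\<forall>x\<in>{a..b}. F'' x \<ge> 0"
  shows "convex_on {a..b} F"
proof (rule convex_on_linorderI)
  show "convex {a..b}" by simp
next
  have mono: "F' u \<le> F' v" if uv: "a \<le> u" "u \<le> v" "v \<le> b" for u v
  proof (cases "u = v")
    case False
    then obtain z where "u < z" "z < v" "F' v - F' u = (v - u) * F'' z"
      using mvt_within[OF d2, of u v] uv False by (metis order_le_neq_trans)
    moreover have "F'' z \<ge> 0" using nn \<open>u<z\<close> \<open>z<v\<close> uv by auto
    ultimately show ?thesis using uv by (metis diff_ge_0_iff_ge mult_nonneg_nonneg)
  qed simp
  fix t x y :: real
  assume t: "t > 0" "t < 1" and xy: "x \<in> {a..b}" "y \<in> {a..b}" "x < y"
  define z where "z = (1 - t) * x + t * y"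
  have e1: "z - x = t * (y - x)" "y - z = (1 - t) * (y - x)" by (simp_all add: z_def algebra_simps)
  have xz: "x < z" using xy t e1(1) by (metis diff_gt_0_iff_gt mult_pos_pos)
  have yz: "z < y" using xy t e1(2) by (metis diff_gt_0_iff_gt mult_pos_pos)
  obtain \<xi> where \<xi>: "x < \<xi>" "\<xi> < z" "F z - F x = (z - x) * F' \<xi>"
    using mvt_within[OF d1, of x z] xy xz yz by auto
  obtain \<eta> where \<eta>: "z < \<eta>" "\<eta> < y" "F y - F z = (y - z) * F' \<eta>"
    using mvt_within[OF d1, of z y] xy xz yz by auto
  have m: "F' \<xi> \<le> F' \<eta>" using mono[of \<xi> \<eta>] \<xi> \<eta> xy by auto
  have "(F z - F x) * (1 - t) \<le> (F y - F z) * t"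
  proof -
    have "(F z - F x) * (1 - t) = t * (1 - t) * (y - x) * F' \<xi>" using \<xi>(3) e1 by simp
    also have "\<dots> \<le> t * (1 - t) * (y - x) * F' \<eta>"
      using m t xy by (intro mult_left_mono) auto
    also have "\<dots> = (F y - F z) * t" using \<eta>(3) e1 by simp
    finally show ?thesis .
  qed
  then show "F ((1 - t) *\<^sub>R x + t *\<^sub>R y) \<le> (1 - t) * F x + t * F y"
  proof -
    have "(1 - t) *\<^sub>R x + t *\<^sub>R y = z" by (simp add: z_def)
    then show ?thesis using \<open>(F z - F x) * (1 - t) \<le> (F y - F z) * t\<close> by (simp add: algebra_simps)
  qed
qed

lemma concave_compose_mono:
  fixes f g :: "real \<Rightarrow> real"
  assumes fc: "concave_on {0..1} f" and fm: "mono_on {0..1} f"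
    and gc: "concave_on {a..b} g" and gr: "\<forall>x\<in>{a..b}. g x \<in> {0..1}"
  shows "concave_on {a..b} (\<lambda>x. f (g x))"
proof (rule concave_on_linorderI)
  show "convex {a..b}" by simp
next
  fix t x y :: real
  assume t: "t > 0" "t < 1" and xy: "x \<in> {a..b}" "y \<in> {a..b}" "x < y"
  define z where "z = (1 - t) *\<^sub>R x + t *\<^sub>R y"
  have zI: "z \<in> {a..b}" using convexD[of "{a..b}" x y "1-t" t] xy t by (simp add: z_def)
  define w where "w = (1 - t) * g x + t * g y"
  have w01: "w \<in> {0..1}" using convexD[of "{0..1::real}" "g x" "g y" "1-t" t] gr xy t by (simp add: w_def)
  have "g z \<ge> w" using concave_onD[OF gc, of t x y] t xy by (simp add: z_def w_def)
  then have "f (g z) \<ge> f w" using fm w01 gr zI by (intro mono_onD[OF fm]) auto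
  moreover have "f w \<ge> (1 - t) * f (g x) + t * f (g y)"
    using concave_onD[OF fc, of t "g x" "g y"] t xy gr by (simp add: w_def)
  ultimately show "(1 - t) * f (g x) + t * f (g y) \<le> f (g ((1 - t) *\<^sub>R x + t *\<^sub>R y))"
    by (simp add: z_def)
qed



lemma g_concave:
  fixes ht ht' ht'' :: "real \<Rightarrow> real" and L :: real
  assumes L: "L \<ge> 0"
    and htpos: "\<forall>x\<in>{a..b}. ht x > 0"
    and d1: "\<forall>x\<in>{a..b}. (ht has_real_derivative ht' x) (at x within {a..b})"
    and d2: "\<forall>x\<in>{a..b}. (ht' has_real_derivative ht'' x) (at x within {a..b})"
    and ineq: "\<forall>x\<in>{a..b}. 2 * (ht' x)\<^sup>2 \<le> ht x * ht'' x"
  shows "concave_on {a..b} (\<lambda>x. inverse (1 + L * ht x))"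
proof -
  define D where "D = (\<lambda>x. 1 + L * ht x)"
  have Dpos: "D x > 0" if "x \<in> {a..b}" for x
  proof -
    have "ht x > 0" using htpos that by auto
    then have "0 \<le> L * ht x" using L by simp
    then show ?thesis by (simp add: D_def)
  qed
  have dD: "(D has_real_derivative L * ht' x) (at x within {a..b})" if "x \<in> {a..b}" for x
  proof -
    have "((\<lambda>x. 1 + L * ht x) has_real_derivative 0 + L * ht' x) (at x within {a..b})"
      by (intro DERIV_add DERIV_const DERIV_cmult) (use d1 that in auto)
    then show ?thesis by (simp add: D_def)
  qed
  define G' where "G' = (\<lambda>x. L * ht' x / (D x)\<^sup>2)"
  define G'' where "G'' = (\<lambda>x. L * ht'' x / (D x)\<^sup>2 - 2 * L\<^sup>2 * (ht' x)\<^sup>2 / (D x) ^ 3)"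
  have "convex_on {a..b} (\<lambda>x. - inverse (D x))"
  proof (rule convex_second[where F'=G' and F''=G''])
    show "\<forall>x\<in>{a..b}. ((\<lambda>x. - inverse (D x)) has_real_derivative G' x) (at x within {a..b})"
    proof
      fix x assume x: "x \<in> {a..b}"
      have dx: "D x \<noteq> 0" using Dpos[OF x] by simp
      have "((\<lambda>x. - inverse (D x)) has_real_derivative - (- (L * ht' x * inverse (D x ^ Suc (Suc 0))))) (at x within {a..b})"
        by (intro DERIV_minus DERIV_inverse_fun dD x dx)
      moreover have "- (- (L * ht' x * inverse (D x ^ Suc (Suc 0)))) = G' x"
        by (simp add: G'_def divide_inverse power2_eq_square)
      ultimately show "((\<lambda>x. - inverse (D x)) has_real_derivative G' x) (at x within {a..b})" by simp
    qed
    show "\<forall>x\<in>{a..b}. (G' has_real_derivative G'' x) (at x within {a..b})"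
    proof
      fix x assume x: "x \<in> {a..b}"
      have dx: "D x \<noteq> 0" using Dpos[OF x] by simp
      have dd: "((\<lambda>x. (D x)\<^sup>2) has_real_derivative of_nat 2 * (L * ht' x * D x ^ (2 - Suc 0))) (at x within {a..b})"
        by (intro DERIV_power dD x)
      have dn: "((\<lambda>x. L * ht' x) has_real_derivative L * ht'' x) (at x within {a..b})"
        by (intro DERIV_cmult) (use d2 x in auto)
      have "(G' has_real_derivative
          (L * ht'' x * (D x)\<^sup>2 - L * ht' x * (of_nat 2 * (L * ht' x * D x ^ (2 - Suc 0)))) / ((D x)\<^sup>2 * (D x)\<^sup>2)) (at x within {a..b})"
        unfolding G'_def by (rule DERIV_divide[OF dn dd]) (use dx in simp)
      moreover have "(L * ht'' x * (D x)\<^sup>2 - L * ht' x * (of_nat 2 * (L * ht' x * D x ^ (2 - Suc 0)))) / ((D x)\<^sup>2 * (D x)\<^sup>2) = G'' x"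
        using dx by (simp add: G''_def field_simps power2_eq_square power3_eq_cube)
      ultimately show "(G' has_real_derivative G'' x) (at x within {a..b})" by simp
    qed
    show "\<forall>x\<in>{a..b}. 0 \<le> G'' x"
    proof
      fix x assume x: "x \<in> {a..b}"
      have hp: "ht x > 0" using htpos x by auto
      have i: "2 * (ht' x)\<^sup>2 \<le> ht x * ht'' x" using ineq x by auto
      have h2: "ht'' x \<ge> 0"
      proof -
        have "0 \<le> 2 * (ht' x)\<^sup>2" by simp
        then have "0 \<le> ht x * ht'' x" using i by linarith
        then show ?thesis using hp by (simp add: zero_le_mult_iff)
      qed
      have num: "0 \<le> L * (ht'' x * D x - 2 * L * (ht' x)\<^sup>2)"
      proof -
        have "L * (2 * (ht' x)\<^sup>2) \<le> L * (ht x * ht'' x)" using i L by (rule mult_left_mono)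
        moreover have "ht'' x * D x = ht'' x + L * (ht x * ht'' x)" by (simp add: D_def algebra_simps)
        ultimately have "0 \<le> ht'' x * D x - 2 * L * (ht' x)\<^sup>2" using h2 by (simp add: algebra_simps)
        then show ?thesis using L by simp
      qed
      have "G'' x = L * (ht'' x * D x - 2 * L * (ht' x)\<^sup>2) / (D x) ^ 3"
        using Dpos[OF x] by (simp add: G''_def field_simps power2_eq_square power3_eq_cube)
      then show "0 \<le> G'' x" using num Dpos[OF x] by simp
    qed
  qed
  then show ?thesis by (simp add: concave_on_def D_def)
qed



theorem lemma5:
  fixes \<mu>min \<mu>max \<beta> a L :: real
    and f c h ht ht' ht'' :: "real \<Rightarrow> real"
    and F0 :: "real measure"
  assumes mu_pos: "0 < \<mu>min" and mu_le: "\<mu>min \<le> \<mu>max"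
    and beta_pos: "\<beta> > 0"
    and f_concave: "concave_on {0..1} f" and f_mono: "mono_on {0..1} f" and f_C2: "C2_on {0..1} f"
    and c_convex: "convex_on {\<mu>min..\<mu>max} c" and c_mono: "mono_on {\<mu>min..\<mu>max} c"
    and c_C2: "C2_on {\<mu>min..\<mu>max} c"
    and h_pos: "\<forall>\<mu>\<in>{\<mu>min..\<mu>max}. h \<mu> > 0"
    and ht_def: "\<forall>\<mu>. ht \<mu> = h \<mu> / \<mu>"
    and ht_convex: "convex_on {\<mu>min..\<mu>max} ht"
    and ht_strict_decr: "\<forall>x\<in>{\<mu>min..\<mu>max}. \<forall>y\<in>{\<mu>min..\<mu>max}. x < y \<longrightarrow> ht y < ht x"
    and ht_deriv1: "\<forall>\<mu>\<in>{\<mu>min..\<mu>max}. (ht has_real_derivative ht' \<mu>) (at \<mu> within {\<mu>min..\<mu>max})"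
    and ht_deriv2: "\<forall>\<mu>\<in>{\<mu>min..\<mu>max}. (ht' has_real_derivative ht'' \<mu>) (at \<mu> within {\<mu>min..\<mu>max})"
    and ht_ineq: "\<forall>\<mu>\<in>{\<mu>min..\<mu>max}. 2 * (ht' \<mu>)\<^sup>2 \<le> ht \<mu> * ht'' \<mu>"
    and F0_prob: "prob_space F0" and F0_sets: "sets F0 = sets borel"
    and F0_supp: "measure F0 {\<mu>min..\<mu>max} = 1"
    and L_dom: "\<forall>\<mu>\<in>{\<mu>min..\<mu>max}. 1 + L * ht \<mu> > 0"
    and L_eq: "(LINT \<mu>:{\<mu>min..\<mu>max}|F0. \<mu> * (1 + \<beta>) / ((LINT x|F0. x) * (1 + L * ht \<mu>))) = \<beta>"
    and L_unique: "\<forall>L'. (\<forall>\<mu>\<in>{\<mu>min..\<mu>max}. 1 + L' * ht \<mu> > 0)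
        \<and> (LINT \<mu>:{\<mu>min..\<mu>max}|F0. \<mu> * (1 + \<beta>) / ((LINT x|F0. x) * (1 + L' * ht \<mu>))) = \<beta>
        \<longrightarrow> L' = L"
    and a_pos: "a > 0"
  shows "concave_on {\<mu>min..\<mu>max} (\<lambda>\<mu>. f (inverse (1 + L * ht \<mu>)) - a * c \<mu>)"
proof -
  interpret P: prob_space F0 by (rule F0_prob)
  define I where "I = {\<mu>min..\<mu>max}"
  define m where "m = (LINT x|F0. x)"
  have Isets: "I \<in> sets F0" using F0_sets by (simp add: I_def)
  have meas: "(\<lambda>x::real. x) \<in> borel_measurable F0"
    by (rule measurable_ident_sets[OF F0_sets])
  have AEI: "AE x in F0. x \<in> I" using P.AE_prob_1[of I] F0_supp by (simp add: I_def)
  have htpos: "\<forall>x\<in>I. ht x > 0"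
  proof
    fix x assume "x \<in> I"
    then have "x > 0" "h x > 0" using mu_pos h_pos by (auto simp: I_def)
    then show "ht x > 0" using ht_def by simp
  qed
  have intx: "integrable F0 (\<lambda>x. x)"
  proof (rule P.integrable_const_bound[where B="\<mu>max"])
    show "AE x in F0. norm x \<le> \<mu>max" using AEI by eventually_elim (use mu_pos in \<open>auto simp: I_def\<close>)
  qed (rule meas)
  have m_ge: "m \<ge> \<mu>min"
  proof -
    have "AE x in F0. \<mu>min \<le> x" using AEI by eventually_elim (auto simp: I_def)
    then have "(LINT x|F0. \<mu>min) \<le> m" unfolding m_def
      by (intro integral_mono_AE P.integrable_const intx)
    then show ?thesis using P.prob_space by simp
  qed
  have m_pos: "m > 0" using m_ge mu_pos by simp
  have m_set: "(LINT x:I|F0. x) = m"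
    unfolding set_lebesgue_integral_def m_def
    by (rule integral_cong_AE) (use meas Isets AEI in \<open>auto\<close>)
  have sintx: "set_integrable F0 I (\<lambda>x. x)"
    unfolding set_integrable_def by (rule integrable_mult_indicator[OF Isets intx])
  have L_nonneg: "L \<ge> 0"
  proof (rule ccontr)
    assume "\<not> L \<ge> 0"
    then have Lneg: "L < 0" by simp
    define k where "k = (\<lambda>\<mu>. \<mu> * (1 + \<beta>) / ((LINT x|F0. x) * (1 + L * ht \<mu>)))"
    have Leq: "(LINT \<mu>:I|F0. k \<mu>) = \<beta>" using L_eq by (simp add: k_def I_def)
    show False
    proof (cases "set_integrable F0 I k")
      case False
      then have "(LINT \<mu>:I|F0. k \<mu>) = 0"
        unfolding set_lebesgue_integral_def set_integrable_def by (rule not_integrable_integral_eq)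
      then show False using Leq beta_pos by simp
    next
      case True
      have s2: "set_integrable F0 I (\<lambda>\<mu>. ((1 + \<beta>) / m) * \<mu>)"
        by (rule set_integrable_mult_right) (rule sintx)
      have le: "((1 + \<beta>) / m) * \<mu> \<le> k \<mu>" if "\<mu> \<in> I" for \<mu>
      proof -
        define X where "X = ((1 + \<beta>) / m) * \<mu>"
        have X0: "X \<ge> 0" using that mu_pos m_pos beta_pos by (auto simp: X_def I_def)
        have D0: "1 + L * ht \<mu> > 0" using L_dom that by (auto simp: I_def)
        have D1: "1 + L * ht \<mu> \<le> 1" using Lneg htpos that by (simp add: mult_nonpos_nonneg less_imp_le)
        have kX: "k \<mu> = X / (1 + L * ht \<mu>)" by (simp add: k_def X_def m_def)
        have "X * (1 + L * ht \<mu>) \<le> X * 1" using D1 X0 by (rule mult_left_mono)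
        then have "X \<le> X / (1 + L * ht \<mu>)" using D0 by (simp add: pos_le_divide_eq)
        then show ?thesis using kX X_def by simp
      qed
      have "(LINT \<mu>:I|F0. ((1 + \<beta>) / m) * \<mu>) \<le> (LINT \<mu>:I|F0. k \<mu>)"
        by (rule set_integral_mono[OF s2 True le])
      moreover have "(LINT \<mu>:I|F0. ((1 + \<beta>) / m) * \<mu>) = 1 + \<beta>"
        using m_set m_pos by simp
      ultimately show False using Leq by simp
    qed
  qed
  have gc: "concave_on I (\<lambda>\<mu>. inverse (1 + L * ht \<mu>))"
    unfolding I_def by (rule g_concave[OF L_nonneg _ ht_deriv1 ht_deriv2 ht_ineq]) (use htpos in \<open>simp add: I_def\<close>)
  have gr: "\<forall>x\<in>I. inverse (1 + L * ht x) \<in> {0..1}"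
  proof
    fix x assume "x \<in> I"
    then have "1 \<le> 1 + L * ht x" using htpos L_nonneg by (simp add: less_imp_le)
    then show "inverse (1 + L * ht x) \<in> {0..1}" by (simp add: inverse_le_1_iff)
  qed
  have fc: "concave_on I (\<lambda>\<mu>. f (inverse (1 + L * ht \<mu>)))"
    unfolding I_def by (rule concave_compose_mono[OF f_concave f_mono]) (use gc gr in \<open>simp_all add: I_def\<close>)
  have cc: "convex_on I (\<lambda>\<mu>. a * c \<mu>)"
    using c_convex a_pos by (intro convex_on_cmul) (auto simp: I_def)
  show ?thesis using concave_on_diff[OF fc cc] by (simp add: I_def)
qed

end
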